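(* Let $p$ be a prime, let $G$ be a finite $p$-solvable group and let $P$ be a Sylow $p$-subgroup of $G$. If $P$ is abelian and $N_G(P)$ is $p$-supersolvable, then $G$ is $p$-supersolvable.
   Context: All groups are finite. A group is $p$-supersolvable if every chief factor of order divisible by $p$ is cyclic (of order $p$). *)

theory Defs
  imports "HOL-Algebra.Algebra"
begin

definition chief_factor :: "('a, 'b) monoid_scheme \<Rightarrow> 'a set \<Rightarrow> 'a set \<Rightarrow> bool" where
  "chief_factor G H K \<longleftrightarrow> K \<lhd> G \<and> H \<lhd> G \<and> K \<subset> H \<and>
     \<not> (\<exists>N. N \<lhd> G \<and> K \<subset> N \<and> N \<subset> H)"

definition factor_order :: "'a set \<Rightarrow> 'a set \<Rightarrow> nat" where
  "factor_order H K = card H div card K"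

definition p_supersolvable :: "nat \<Rightarrow> ('a, 'b) monoid_scheme \<Rightarrow> bool" where
  "p_supersolvable p G \<longleftrightarrow>
     (\<forall>H K. chief_factor G H K \<and> p dvd factor_order H K \<longrightarrow>
        factor_order H K = p \<and> cyclic_group ((G\<lparr>carrier := H\<rparr>) Mod K))"

definition p_solvable :: "nat \<Rightarrow> ('a, 'b) monoid_scheme \<Rightarrow> bool" where
  "p_solvable p G \<longleftrightarrow>
     (\<exists>Gs. Gs \<noteq> [] \<and> hd Gs = {\<one>\<^bsub>G\<^esub>} \<and> last Gs = carrier G \<and>
        (\<forall>i < length Gs. subgroup (Gs ! i) G) \<and>
        (\<forall>i. Suc i < length Gs \<longrightarrow>
           Gs ! i \<lhd> G\<lparr>carrier := Gs ! Suc i\<rparr> \<and>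
           ((\<exists>k. factor_order (Gs ! Suc i) (Gs ! i) = p ^ k) \<or>
            coprime (factor_order (Gs ! Suc i) (Gs ! i)) p)))"

definition sylow_subgroup :: "nat \<Rightarrow> ('a, 'b) monoid_scheme \<Rightarrow> 'a set \<Rightarrow> bool" where
  "sylow_subgroup p G P \<longleftrightarrow> subgroup P G \<and> card P = p ^ multiplicity p (order G)"

end

theory Submission
  imports Defs
begin


context group begin

lemma sub_normal_iff:
  assumes "subgroup B G"
  shows "A \<lhd> G\<lparr>carrier := B\<rparr> \<longleftrightarrow> subgroup A G \<and> A \<subseteq> B \<and> (\<forall>x\<in>B. \<forall>h\<in>A. x \<otimes> h \<otimes> inv x \<in> A)"
proof -
  interpret B: group "G\<lparr>carrier := B\<rparr>" by (rule subgroup_imp_group[OF assms])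
  have s: "subgroup A (G\<lparr>carrier := B\<rparr>) \<longleftrightarrow> subgroup A G \<and> A \<subseteq> B"
    using incl_subgroup[OF assms] subgroup_incl[OF _ assms] subgroup.subset by fastforce
  have "A \<lhd> G\<lparr>carrier := B\<rparr> \<longleftrightarrow> subgroup A (G\<lparr>carrier := B\<rparr>) \<and> (\<forall>x\<in>B. \<forall>h\<in>A. x \<otimes> h \<otimes> inv\<^bsub>G\<lparr>carrier := B\<rparr>\<^esub> x \<in> A)"
    using B.normal_inv_iff by simp
  also have "\<dots> \<longleftrightarrow> subgroup A G \<and> A \<subseteq> B \<and> (\<forall>x\<in>B. \<forall>h\<in>A. x \<otimes> h \<otimes> inv x \<in> A)"
    using s assms by simp
  finally show ?thesis .
qed

lemma mem_set_mult: "x \<in> A <#> B \<longleftrightarrow> (\<exists>a\<in>A. \<exists>b\<in>B. x = a \<otimes> b)"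
  unfolding set_mult_def by auto

lemma normal_mult_subgroup:
  assumes "K \<lhd> G" "subgroup A G"
  shows "subgroup (A <#> K) G"
proof -
  have "subgroup (K <#> A) G"
    by (rule second_isomorphism_grp.normal_set_mult_subgroup[OF second_isomorphism_grp.intro[OF assms(1) second_isomorphism_grp_axioms.intro[OF assms(2)]]])
  moreover have "K <#> A = A <#> K"
  proof
    show "K <#> A \<subseteq> A <#> K"
    proof
      fix x assume "x \<in> K <#> A"
      then obtain k a where ka: "k \<in> K" "a \<in> A" "x = k \<otimes> a" by (auto simp: mem_set_mult)
      have ac: "a \<in> carrier G" by (rule subgroup.mem_carrier[OF assms(2) ka(2)])
      have kc: "k \<in> carrier G" by (rule subgroup.mem_carrier[OF normal_imp_subgroup[OF assms(1)] ka(1)])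
      have "inv a \<otimes> k \<otimes> inv (inv a) \<in> K"
        using assms(1) ac ka(1) unfolding normal_inv_iff by blast
      then have "inv a \<otimes> k \<otimes> a \<in> K" using ac by simp
      moreover have "x = a \<otimes> (inv a \<otimes> k \<otimes> a)" using ka ac kc by (simp add: m_assoc[symmetric])
      ultimately show "x \<in> A <#> K" using ka by (auto simp: mem_set_mult)
    qed
  next
    show "A <#> K \<subseteq> K <#> A"
    proof
      fix x assume "x \<in> A <#> K"
      then obtain k a where ka: "k \<in> K" "a \<in> A" "x = a \<otimes> k" by (auto simp: mem_set_mult)
      have ac: "a \<in> carrier G" by (rule subgroup.mem_carrier[OF assms(2) ka(2)])
      have kc: "k \<in> carrier G" by (rule subgroup.mem_carrier[OF normal_imp_subgroup[OF assms(1)] ka(1)])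
      have "a \<otimes> k \<otimes> inv a \<in> K"
        using assms(1) ac ka(1) unfolding normal_inv_iff by blast
      moreover have "x = (a \<otimes> k \<otimes> inv a) \<otimes> a" using ka ac kc by (simp add: m_assoc)
      ultimately show "x \<in> K <#> A" using ka by (auto simp: mem_set_mult)
    qed
  qed
  ultimately show ?thesis by simp
qed

lemma card_subgroup_dvd:
  assumes "finite (carrier G)" "subgroup A G" "subgroup B G" "A \<subseteq> B"
  shows "card A dvd card B"
proof -
  interpret B: group "G\<lparr>carrier := B\<rparr>" by (rule subgroup_imp_group[OF assms(3)])
  have "subgroup A (G\<lparr>carrier := B\<rparr>)" using subgroup_incl assms by blast
  then have "card (rcosets\<^bsub>G\<lparr>carrier := B\<rparr>\<^esub> A) * card A = order (G\<lparr>carrier := B\<rparr>)"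
    by (rule B.lagrange)
  then have "card (rcosets\<^bsub>G\<lparr>carrier := B\<rparr>\<^esub> A) * card A = card B"
    by (simp add: order_def)
  then show ?thesis by (metis dvd_triv_right)
qed

lemma card_subgroup_pos:
  assumes "finite (carrier G)" "subgroup A G"
  shows "card A > 0"
  using assms subgroup.one_closed subgroup.subset
  by (metis card_gt_0_iff empty_iff finite_subset)

lemma gc1 [simp]: "x \<in> carrier G \<Longrightarrow> y \<in> carrier G \<Longrightarrow> x \<otimes> (inv x \<otimes> y) = y"
  by (simp add: m_assoc[symmetric])
lemma gc2 [simp]: "x \<in> carrier G \<Longrightarrow> y \<in> carrier G \<Longrightarrow> inv x \<otimes> (x \<otimes> y) = y"
  by (simp add: m_assoc[symmetric])
lemmas gs = m_assoc gc1 gc2 inv_mult_group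

lemma prod_card:
  assumes fin: "finite (carrier G)" and A: "subgroup A G" and B: "subgroup B G"
  shows "card (A <#> B) * card (A \<inter> B) = card A * card B"
proof -
  define F where "F x = {ab \<in> A \<times> B. fst ab \<otimes> snd ab = x}" for x
  have Ac: "A \<subseteq> carrier G" and Bc: "B \<subseteq> carrier G" using A B subgroup.subset by auto
  have finA: "finite A" and finB: "finite B" using Ac Bc fin finite_subset by auto
  have finAB: "finite (A <#> B)" using setmult_subset_G[OF Ac Bc] fin finite_subset by blast
  have cover: "A \<times> B = (\<Union>x\<in>A <#> B. F x)"
  proof
    show "A \<times> B \<subseteq> (\<Union>x\<in>A <#> B. F x)"
    proof
      fix y assume y: "y \<in> A \<times> B"
      then have "fst y \<in> A" "snd y \<in> B" by auto
      then have "fst y \<otimes> snd y \<in> A <#> B" unfolding mem_set_mult by blast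
      then show "y \<in> (\<Union>x\<in>A <#> B. F x)" using y unfolding F_def by blast
    qed
  qed (auto simp: F_def)
  have fib: "card (F x) = card (A \<inter> B)" if x: "x \<in> A <#> B" for x
  proof -
    obtain a0 b0 where ab0: "a0 \<in> A" "b0 \<in> B" "x = a0 \<otimes> b0" using x by (auto simp: mem_set_mult)
    have a0c: "a0 \<in> carrier G" and b0c: "b0 \<in> carrier G" using ab0 Ac Bc by auto
    have "bij_betw (\<lambda>c. (a0 \<otimes> c, inv c \<otimes> b0)) (A \<inter> B) (F x)"
    proof (rule bij_betw_imageI)
      show "inj_on (\<lambda>c. (a0 \<otimes> c, inv c \<otimes> b0)) (A \<inter> B)"
      proof (rule inj_onI)
        fix c d assume "c \<in> A \<inter> B" "d \<in> A \<inter> B" "(a0 \<otimes> c, inv c \<otimes> b0) = (a0 \<otimes> d, inv d \<otimes> b0)"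
        then have "c \<in> carrier G" "d \<in> carrier G" "a0 \<otimes> c = a0 \<otimes> d" using Ac by auto
        then show "c = d" using a0c by simp
      qed
      show "(\<lambda>c. (a0 \<otimes> c, inv c \<otimes> b0)) ` (A \<inter> B) = F x"
      proof
        show "(\<lambda>c. (a0 \<otimes> c, inv c \<otimes> b0)) ` (A \<inter> B) \<subseteq> F x"
        proof
          fix y assume "y \<in> (\<lambda>c. (a0 \<otimes> c, inv c \<otimes> b0)) ` (A \<inter> B)"
          then obtain c where c: "c \<in> A" "c \<in> B" "y = (a0 \<otimes> c, inv c \<otimes> b0)" by auto
          have cc: "c \<in> carrier G" using c Ac by auto
          have "a0 \<otimes> c \<in> A" by (rule subgroup.m_closed[OF A ab0(1) c(1)])
          moreover have "inv c \<otimes> b0 \<in> B" by (rule subgroup.m_closed[OF B subgroup.m_inv_closed[OF B c(2)] ab0(2)])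
          moreover have "(a0 \<otimes> c) \<otimes> (inv c \<otimes> b0) = x"
            using a0c b0c cc ab0 by (simp add: gs)
          ultimately show "y \<in> F x" unfolding F_def using c by auto
        qed
      next
        show "F x \<subseteq> (\<lambda>c. (a0 \<otimes> c, inv c \<otimes> b0)) ` (A \<inter> B)"
        proof
          fix y assume "y \<in> F x"
          then obtain a b where y: "y = (a, b)" "a \<in> A" "b \<in> B" "a \<otimes> b = x" unfolding F_def by auto
          have ac: "a \<in> carrier G" and bc: "b \<in> carrier G" using y Ac Bc by auto
          define c where "c = inv a0 \<otimes> a"
          have cc: "c \<in> carrier G" using a0c ac c_def by simp
          have cA: "c \<in> A" unfolding c_def by (rule subgroup.m_closed[OF A subgroup.m_inv_closed[OF A ab0(1)] y(2)])
          have eq: "a0 \<otimes> b0 = a \<otimes> b" using ab0 y by simp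
          have c2: "c = b0 \<otimes> inv b"
          proof -
            have "inv a0 \<otimes> (a0 \<otimes> b0) \<otimes> inv b = inv a0 \<otimes> (a \<otimes> b) \<otimes> inv b" using eq by simp
            then show ?thesis using a0c b0c ac bc c_def by (simp add: gs)
          qed
          have cB: "c \<in> B" unfolding c2 by (rule subgroup.m_closed[OF B ab0(2) subgroup.m_inv_closed[OF B y(3)]])
          have "a0 \<otimes> c = a" using a0c ac c_def by (simp add: gs)
          moreover have "inv c \<otimes> b0 = b"
            using c2 b0c bc by (simp add: gs)
          ultimately show "y \<in> (\<lambda>c. (a0 \<otimes> c, inv c \<otimes> b0)) ` (A \<inter> B)"
            using y cA cB by force
        qed
      qed
    qed
    then show ?thesis by (simp add: bij_betw_same_card)
  qed
  have "card A * card B = card (A \<times> B)" by (simp add: card_cartesian_product)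
  also have "\<dots> = card (\<Union>x\<in>A <#> B. F x)" using cover by simp
  also have "\<dots> = (\<Sum>x\<in>A <#> B. card (F x))"
  proof (rule card_UN_disjoint[OF finAB])
    show "\<forall>x\<in>A <#> B. finite (F x)"
      using finA finB unfolding F_def by auto
    show "\<forall>x\<in>A <#> B. \<forall>y\<in>A <#> B. x \<noteq> y \<longrightarrow> F x \<inter> F y = {}"
      unfolding F_def by auto
  qed
  also have "\<dots> = (\<Sum>x\<in>A <#> B. card (A \<inter> B))" using fib by simp
  also have "\<dots> = card (A <#> B) * card (A \<inter> B)" by simp
  finally show ?thesis by simp
qed

end



definition good :: "('a, 'b) monoid_scheme \<Rightarrow> (nat \<Rightarrow> bool) \<Rightarrow> 'a set \<Rightarrow> 'a set \<Rightarrow> 'a set \<Rightarrow> bool" where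
  "good G Q K Y W \<longleftrightarrow> W \<lhd> G\<lparr>carrier := Y\<rparr> \<and> K \<subseteq> W \<and> Q (card W div card K)"

definition nice :: "(nat \<Rightarrow> bool) \<Rightarrow> bool" where
  "nice Q \<longleftrightarrow> Q 1 \<and> (\<forall>n d. Q n \<and> d dvd n \<longrightarrow> Q d) \<and> (\<forall>a b. Q a \<and> Q b \<longrightarrow> Q (a * b))"

definition Omax :: "('a, 'b) monoid_scheme \<Rightarrow> (nat \<Rightarrow> bool) \<Rightarrow> 'a set \<Rightarrow> 'a set \<Rightarrow> 'a set" where
  "Omax G Q K Y = (SOME W. good G Q K Y W \<and> (\<forall>W'. good G Q K Y W' \<longrightarrow> card W' \<le> card W))"

context group begin

lemma nconj: "N \<lhd> G \<Longrightarrow> g \<in> carrier G \<Longrightarrow> h \<in> N \<Longrightarrow> g \<otimes> h \<otimes> inv g \<in> N"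
  unfolding normal_inv_iff by blast

lemma nconj': "N \<lhd> G \<Longrightarrow> g \<in> carrier G \<Longrightarrow> h \<in> N \<Longrightarrow> inv g \<otimes> h \<otimes> g \<in> N"
  using nconj[of N "inv g" h] by simp

lemma ncarr: "N \<lhd> G \<Longrightarrow> h \<in> N \<Longrightarrow> h \<in> carrier G"
  by (rule subgroup.mem_carrier[OF normal_imp_subgroup])

lemma scarr: "subgroup N G \<Longrightarrow> h \<in> N \<Longrightarrow> h \<in> carrier G"
  by (rule subgroup.mem_carrier)

lemma normal_mult_normal:
  assumes K: "K \<lhd> G" and B: "subgroup B G" and A: "A \<lhd> G\<lparr>carrier := B\<rparr>"
  shows "A <#> K \<lhd> G\<lparr>carrier := B <#> K\<rparr>"
proof -
  have As: "subgroup A G" "A \<subseteq> B" and Ac: "\<And>x h. x \<in> B \<Longrightarrow> h \<in> A \<Longrightarrow> x \<otimes> h \<otimes> inv x \<in> A"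
    using A sub_normal_iff[OF B] by auto
  have BK: "subgroup (B <#> K) G" by (rule normal_mult_subgroup[OF K B])
  have AK: "subgroup (A <#> K) G" by (rule normal_mult_subgroup[OF K As(1)])
  have sub: "A <#> K \<subseteq> B <#> K" using As(2) by (simp add: mono_set_mult)
  have "\<forall>x\<in>B <#> K. \<forall>h\<in>A <#> K. x \<otimes> h \<otimes> inv x \<in> A <#> K"
  proof (intro ballI)
    fix x h assume x: "x \<in> B <#> K" and h: "h \<in> A <#> K"
    obtain b k1 where bk: "b \<in> B" "k1 \<in> K" "x = b \<otimes> k1" using x unfolding mem_set_mult by blast
    obtain a k2 where ak: "a \<in> A" "k2 \<in> K" "h = a \<otimes> k2" using h unfolding mem_set_mult by blast
    have bc: "b \<in> carrier G" by (rule scarr[OF B bk(1)])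
    have ac: "a \<in> carrier G" by (rule scarr[OF As(1) ak(1)])
    have k1c: "k1 \<in> carrier G" by (rule ncarr[OF K bk(2)])
    have k2c: "k2 \<in> carrier G" by (rule ncarr[OF K ak(2)])
    have a': "b \<otimes> a \<otimes> inv b \<in> A" by (rule Ac[OF bk(1) ak(1)])
    have i1: "inv a \<otimes> k1 \<otimes> a \<in> K" by (rule nconj'[OF K ac bk(2)])
    have i2: "inv a \<otimes> k1 \<otimes> a \<otimes> k2 \<otimes> inv k1 \<in> K"
      using i1 ak(2) bk(2) K normal_imp_subgroup subgroup.m_closed subgroup.m_inv_closed
      by (metis)
    have k': "b \<otimes> (inv a \<otimes> k1 \<otimes> a \<otimes> k2 \<otimes> inv k1) \<otimes> inv b \<in> K"
      by (rule nconj[OF K bc i2])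
    have "x \<otimes> h \<otimes> inv x = (b \<otimes> a \<otimes> inv b) \<otimes> (b \<otimes> (inv a \<otimes> k1 \<otimes> a \<otimes> k2 \<otimes> inv k1) \<otimes> inv b)"
      using bc ac k1c k2c bk(3) ak(3) by (simp add: gs)
    then show "x \<otimes> h \<otimes> inv x \<in> A <#> K" using a' k' unfolding mem_set_mult by blast
  qed
  then show ?thesis using sub_normal_iff[OF BK] AK sub by blast
qed

end



context group begin

lemma good_K:
  assumes fin: "finite (carrier G)" and K: "K \<lhd> G" and Y: "subgroup Y G" and KY: "K \<subseteq> Y"
    and Q: "nice Q"
  shows "good G Q K Y K"
proof -
  have "K \<lhd> G\<lparr>carrier := Y\<rparr>"
    using sub_normal_iff[OF Y] normal_imp_subgroup[OF K] KY nconj[OF K] scarr[OF Y] by blast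
  moreover have "card K > 0" by (rule card_subgroup_pos[OF fin normal_imp_subgroup[OF K]])
  ultimately show ?thesis using Q unfolding good_def nice_def by simp
qed

lemma good_mult:
  assumes fin: "finite (carrier G)" and K: "K \<lhd> G" and Y: "subgroup Y G"
    and Q: "nice Q" and W1: "good G Q K Y W1" and W2: "good G Q K Y W2"
  shows "good G Q K Y (W1 <#> W2)"
proof -
  interpret GY: group "G\<lparr>carrier := Y\<rparr>" by (rule subgroup_imp_group[OF Y])
  have n1: "W1 \<lhd> G\<lparr>carrier := Y\<rparr>" and n2: "W2 \<lhd> G\<lparr>carrier := Y\<rparr>"
    and k1: "K \<subseteq> W1" and k2: "K \<subseteq> W2"
    and q1: "Q (card W1 div card K)" and q2: "Q (card W2 div card K)"
    using W1 W2 unfolding good_def by auto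
  have n12: "W1 <#> W2 \<lhd> G\<lparr>carrier := Y\<rparr>"
    using GY.normal_subgroup_set_mult_closed[OF n1 n2] by simp
  have s1: "subgroup W1 G" and s2: "subgroup W2 G" and s12: "subgroup (W1 <#> W2) G"
    using n1 n2 n12 sub_normal_iff[OF Y] by auto
  have sK: "subgroup K G" by (rule normal_imp_subgroup[OF K])
  have sI: "subgroup (W1 \<inter> W2) G" by (rule subgroups_Inter_pair[OF s1 s2])
  have kp: "K \<subseteq> W1 <#> W2"
  proof
    fix k assume "k \<in> K"
    then have "k \<in> W1" "\<one> \<in> W2" "k = k \<otimes> \<one>" using k1 subgroup.one_closed[OF s2] ncarr[OF K] by auto
    then show "k \<in> W1 <#> W2" unfolding mem_set_mult by blast
  qed
  obtain r1 where r1: "card W1 = card K * r1" using card_subgroup_dvd[OF fin sK s1 k1] by (auto elim: dvdE)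
  obtain r2 where r2: "card W2 = card K * r2" using card_subgroup_dvd[OF fin sK s2 k2] by (auto elim: dvdE)
  have kI: "K \<subseteq> W1 \<inter> W2" using k1 k2 by auto
  obtain r3 where r3: "card (W1 \<inter> W2) = card K * r3" using card_subgroup_dvd[OF fin sK sI kI] by (auto elim: dvdE)
  obtain r where r: "card (W1 <#> W2) = card K * r" using card_subgroup_dvd[OF fin sK s12 kp] by (auto elim: dvdE)
  have c0: "card K > 0" by (rule card_subgroup_pos[OF fin sK])
  have "card (W1 <#> W2) * card (W1 \<inter> W2) = card W1 * card W2" by (rule prod_card[OF fin s1 s2])
  then have "(card K * card K) * (r * r3) = (card K * card K) * (r1 * r2)"
    unfolding r r1 r2 r3 by (simp add: ac_simps)
  then have "r * r3 = r1 * r2" using c0 by simp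
  then have "r dvd r1 * r2" by (metis dvd_triv_left)
  moreover have "Q r1" "Q r2" using q1 q2 r1 r2 c0 by auto
  ultimately have "Q r" using Q unfolding nice_def by blast
  then have "Q (card (W1 <#> W2) div card K)" using r c0 by simp
  then show ?thesis using n12 kp unfolding good_def by simp
qed

lemma good_sub: "good G Q K Y W \<Longrightarrow> subgroup Y G \<Longrightarrow> subgroup W G \<and> W \<subseteq> Y"
  unfolding good_def using sub_normal_iff by blast

lemma Omax_ex:
  assumes fin: "finite (carrier G)" and K: "K \<lhd> G" and Y: "subgroup Y G" and KY: "K \<subseteq> Y"
    and Q: "nice Q"
  shows "good G Q K Y (Omax G Q K Y) \<and> (\<forall>W'. good G Q K Y W' \<longrightarrow> card W' \<le> card (Omax G Q K Y))"
proof -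
  have "\<exists>W. good G Q K Y W \<and> (\<forall>W'. good G Q K Y W' \<longrightarrow> card W' \<le> card W)"
  proof (rule Lattices_Big.ex_has_greatest_nat[where f = card and b = "Suc (card (carrier G))"])
    show "good G Q K Y K" by (rule good_K[OF assms])
    show "\<forall>W'. good G Q K Y W' \<longrightarrow> card W' < Suc (card (carrier G))"
    proof (intro allI impI)
      fix W' assume "good G Q K Y W'"
      then have "W' \<subseteq> carrier G" using good_sub[OF _ Y] subgroup.subset by blast
      then have "card W' \<le> card (carrier G)" by (rule card_mono[OF fin])
      then show "card W' < Suc (card (carrier G))" by simp
    qed
  qed
  then show ?thesis unfolding Omax_def by (rule someI_ex)
qed

lemma Omax_max:
  assumes fin: "finite (carrier G)" and K: "K \<lhd> G" and Y: "subgroup Y G" and KY: "K \<subseteq> Y"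
    and Q: "nice Q" and W: "good G Q K Y W"
  shows "W \<subseteq> Omax G Q K Y"
proof -
  let ?O = "Omax G Q K Y"
  have O: "good G Q K Y ?O" and mx: "\<And>W'. good G Q K Y W' \<Longrightarrow> card W' \<le> card ?O"
    using Omax_ex[OF assms(1-5)] by auto
  have gW: "good G Q K Y (W <#> ?O)" by (rule good_mult[OF fin K Y Q W O])
  have sW: "subgroup W G" and sO: "subgroup ?O G" using good_sub[OF W Y] good_sub[OF O Y] by auto
  have sWO: "subgroup (W <#> ?O) G" using good_sub[OF gW Y] by auto
  have OWO: "?O \<subseteq> W <#> ?O"
  proof
    fix x assume "x \<in> ?O"
    then have "\<one> \<in> W" "x \<in> ?O" "x = \<one> \<otimes> x" using subgroup.one_closed[OF sW] scarr[OF sO] by auto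
    then show "x \<in> W <#> ?O" unfolding mem_set_mult by blast
  qed
  have WWO: "W \<subseteq> W <#> ?O"
  proof
    fix x assume "x \<in> W"
    then have "\<one> \<in> ?O" "x \<in> W" "x = x \<otimes> \<one>" using subgroup.one_closed[OF sO] scarr[OF sW] by auto
    then show "x \<in> W <#> ?O" unfolding mem_set_mult by blast
  qed
  have fin2: "finite (W <#> ?O)" using subgroup.subset[OF sWO] fin finite_subset by blast
  have "card (W <#> ?O) \<le> card ?O" by (rule mx[OF gW])
  then have "?O = W <#> ?O" using card_seteq[OF fin2 OWO] by simp
  then show ?thesis using WWO by simp
qed

end



context group begin

lemma conj_image_subgroup:
  assumes W: "subgroup W G" and z: "z \<in> carrier G"
  shows "subgroup ((\<lambda>w. z \<otimes> w \<otimes> inv z) ` W) G"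
proof (rule subgroupI)
  show "(\<lambda>w. z \<otimes> w \<otimes> inv z) ` W \<subseteq> carrier G" using z scarr[OF W] by auto
  show "(\<lambda>w. z \<otimes> w \<otimes> inv z) ` W \<noteq> {}" using subgroup.one_closed[OF W] by blast
next
  fix a assume "a \<in> (\<lambda>w. z \<otimes> w \<otimes> inv z) ` W"
  then obtain w where w: "w \<in> W" "a = z \<otimes> w \<otimes> inv z" by blast
  have wc: "w \<in> carrier G" by (rule scarr[OF W w(1)])
  have "inv a = z \<otimes> inv w \<otimes> inv z" using w(2) wc z by (simp add: gs)
  then show "inv a \<in> (\<lambda>w. z \<otimes> w \<otimes> inv z) ` W" using subgroup.m_inv_closed[OF W w(1)] by blast
next
  fix a b assume "a \<in> (\<lambda>w. z \<otimes> w \<otimes> inv z) ` W" "b \<in> (\<lambda>w. z \<otimes> w \<otimes> inv z) ` W"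
  then obtain v w where w: "v \<in> W" "a = z \<otimes> v \<otimes> inv z" "w \<in> W" "b = z \<otimes> w \<otimes> inv z" by blast
  have wc: "w \<in> carrier G" "v \<in> carrier G" using scarr[OF W w(1)] scarr[OF W w(3)] by auto
  have "a \<otimes> b = z \<otimes> (v \<otimes> w) \<otimes> inv z" using w wc z by (simp add: gs)
  then show "a \<otimes> b \<in> (\<lambda>w. z \<otimes> w \<otimes> inv z) ` W" using subgroup.m_closed[OF W w(1) w(3)] by blast
qed

lemma conj_image_card:
  assumes W: "W \<subseteq> carrier G" and z: "z \<in> carrier G"
  shows "card ((\<lambda>w. z \<otimes> w \<otimes> inv z) ` W) = card W"
proof (rule card_image)
  show "inj_on (\<lambda>w. z \<otimes> w \<otimes> inv z) W"
  proof (rule inj_onI)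
    fix v w assume "v \<in> W" "w \<in> W" "z \<otimes> v \<otimes> inv z = z \<otimes> w \<otimes> inv z"
    then show "v = w" using W z by (simp add: subset_iff)
  qed
qed

lemma Omax_step:
  assumes fin: "finite (carrier G)" and K: "K \<lhd> G" and Y: "subgroup Y G" and KY: "K \<subseteq> Y"
    and Q: "nice Q" and Z: "subgroup Z G" and YZ: "Y \<lhd> G\<lparr>carrier := Z\<rparr>"
  shows "Omax G Q K Y \<subseteq> Omax G Q K Z"
proof -
  let ?W = "Omax G Q K Y"
  have gW: "good G Q K Y ?W" using Omax_ex[OF fin K Y KY Q] by auto
  have sW: "subgroup ?W G" and WY: "?W \<subseteq> Y" using good_sub[OF gW Y] by auto
  have nW: "?W \<lhd> G\<lparr>carrier := Y\<rparr>" and KW: "K \<subseteq> ?W" and qW: "Q (card ?W div card K)"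
    using gW unfolding good_def by auto
  have Wc: "\<And>y w. y \<in> Y \<Longrightarrow> w \<in> ?W \<Longrightarrow> y \<otimes> w \<otimes> inv y \<in> ?W" using nW sub_normal_iff[OF Y] by blast
  have YZs: "Y \<subseteq> Z" and Yc: "\<And>z y. z \<in> Z \<Longrightarrow> y \<in> Y \<Longrightarrow> z \<otimes> y \<otimes> inv z \<in> Y"
    using YZ sub_normal_iff[OF Z] by auto
  have conjW: "z \<otimes> w \<otimes> inv z \<in> ?W" if z: "z \<in> Z" and w: "w \<in> ?W" for z w
  proof -
    let ?V = "(\<lambda>w. z \<otimes> w \<otimes> inv z) ` ?W"
    have zc: "z \<in> carrier G" by (rule scarr[OF Z z])
    have izZ: "inv z \<in> Z" by (rule subgroup.m_inv_closed[OF Z z])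
    have sV: "subgroup ?V G" by (rule conj_image_subgroup[OF sW zc])
    have VY: "?V \<subseteq> Y" using Yc[OF z] WY by auto
    have Vc: "\<forall>y\<in>Y. \<forall>v\<in>?V. y \<otimes> v \<otimes> inv y \<in> ?V"
    proof (intro ballI)
      fix y v assume y: "y \<in> Y" and v: "v \<in> ?V"
      then obtain u where u: "u \<in> ?W" "v = z \<otimes> u \<otimes> inv z" by blast
      have yc: "y \<in> carrier G" by (rule scarr[OF Y y])
      have uc: "u \<in> carrier G" by (rule scarr[OF sW u(1)])
      have y': "inv z \<otimes> y \<otimes> z \<in> Y" using Yc[OF izZ y] zc by simp
      have u': "(inv z \<otimes> y \<otimes> z) \<otimes> u \<otimes> inv (inv z \<otimes> y \<otimes> z) \<in> ?W" by (rule Wc[OF y' u(1)])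
      have "y \<otimes> v \<otimes> inv y = z \<otimes> ((inv z \<otimes> y \<otimes> z) \<otimes> u \<otimes> inv (inv z \<otimes> y \<otimes> z)) \<otimes> inv z"
        using u(2) yc uc zc by (simp add: gs)
      then show "y \<otimes> v \<otimes> inv y \<in> ?V" using u' by blast
    qed
    have nV: "?V \<lhd> G\<lparr>carrier := Y\<rparr>" using sub_normal_iff[OF Y] sV VY Vc by blast
    have KV: "K \<subseteq> ?V"
    proof
      fix k assume k: "k \<in> K"
      have kc: "k \<in> carrier G" by (rule ncarr[OF K k])
      have "inv z \<otimes> k \<otimes> z \<in> ?W" using KW nconj'[OF K zc k] by blast
      moreover have "k = z \<otimes> (inv z \<otimes> k \<otimes> z) \<otimes> inv z" using kc zc by (simp add: gs)
      ultimately show "k \<in> ?V" by blast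
    qed
    have cV: "card ?V = card ?W" by (rule conj_image_card[OF subgroup.subset[OF sW] zc])
    have gV: "good G Q K Y ?V" unfolding good_def using nV KV cV qW by simp
    have "?V \<subseteq> ?W" by (rule Omax_max[OF fin K Y KY Q gV])
    then show ?thesis using w by blast
  qed
  have nWZ: "?W \<lhd> G\<lparr>carrier := Z\<rparr>" using sub_normal_iff[OF Z] sW WY YZs conjW by blast
  have "good G Q K Z ?W" unfolding good_def using nWZ KW qW by simp
  moreover have "K \<subseteq> Z" using KY YZs by blast
  ultimately show ?thesis using Omax_max[OF fin K Z _ Q] by blast
qed

end



lemma nice_ppow: "Factorial_Ring.prime (p::nat) \<Longrightarrow> nice (\<lambda>n. \<exists>k. n = p ^ k)"
  unfolding nice_def
proof (intro conjI allI impI)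
  assume p: "Factorial_Ring.prime p"
  show "\<exists>k. 1 = p ^ k" by (rule exI[of _ 0]) simp
  fix n d assume "(\<exists>k. n = p ^ k) \<and> d dvd n"
  then obtain k where "d dvd p ^ k" by blast
  then show "\<exists>k. d = p ^ k" using divides_primepow_nat[OF p] by blast
next
  fix a b assume "(\<exists>k. a = p ^ k) \<and> (\<exists>k. b = p ^ k)"
  then obtain k l where "a = p ^ k" "b = p ^ l" by blast
  then show "\<exists>k. a * b = p ^ k" by (metis power_add)
qed

lemma nice_cop: "nice (\<lambda>n. coprime n (p::nat))"
  unfolding nice_def
proof (intro conjI allI impI)
  show "coprime 1 p" by simp
  fix n d assume "coprime n p \<and> d dvd n"
  then show "coprime d p" by (meson coprime_imp_coprime dvd_trans)
next
  fix a b assume "coprime a p \<and> coprime b p"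
  then show "coprime (a * b) p" by simp
qed

context group begin

lemma normal_in_self_iff: "N \<lhd> G\<lparr>carrier := carrier G\<rparr> \<longleftrightarrow> N \<lhd> G"
  using sub_normal_iff[OF subgroup_self, of N] normal_inv_iff[of N] subgroup.subset by blast

lemma carrier_mult_K: "K \<lhd> G \<Longrightarrow> carrier G <#> K = carrier G"
proof
  assume K: "K \<lhd> G"
  show "carrier G <#> K \<subseteq> carrier G"
    by (rule setmult_subset_G) (auto simp: ncarr[OF K])
  show "carrier G \<subseteq> carrier G <#> K"
  proof
    fix x assume x: "x \<in> carrier G"
    then have "x = x \<otimes> \<one>" "\<one> \<in> K" using subgroup.one_closed[OF normal_imp_subgroup[OF K]] by auto
    then show "x \<in> carrier G <#> K" using x unfolding mem_set_mult by blast
  qed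
qed

lemma chief_Q:
  assumes fin: "finite (carrier G)"
    and len: "length Gs > 0" and last: "Gs ! (length Gs - 1) = carrier G"
    and sg: "\<forall>i < length Gs. subgroup (Gs ! i) G"
    and nrm: "\<forall>i. Suc i < length Gs \<longrightarrow> Gs ! i \<lhd> G\<lparr>carrier := Gs ! Suc i\<rparr>"
    and ch: "chief_factor G H K" and Q: "nice Q"
    and j: "Suc i < length Gs" and below: "Gs ! i \<inter> H \<subseteq> K" and above: "\<not> Gs ! Suc i \<inter> H \<subseteq> K"
    and qf: "Q (factor_order (Gs ! Suc i) (Gs ! i))"
  shows "Q (factor_order H K)"
proof -
  define S where "S = Gs ! Suc i"
  define R where "R = Gs ! i"
  have K: "K \<lhd> G" and H: "H \<lhd> G" and KH: "K \<subset> H"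
    and nomid: "\<And>N. N \<lhd> G \<Longrightarrow> K \<subset> N \<Longrightarrow> N \<subset> H \<Longrightarrow> False"
    using ch unfolding chief_factor_def by blast+
  have sK: "subgroup K G" and sH: "subgroup H G" using K H normal_imp_subgroup by auto
  have sS: "subgroup S G" and sR: "subgroup R G" using sg j unfolding S_def R_def by auto
  have RS: "R \<lhd> G\<lparr>carrier := S\<rparr>" using nrm j unfolding S_def R_def by auto
  have RSs: "R \<subseteq> S" using RS sub_normal_iff[OF sS] by blast
  have sSH: "subgroup (S \<inter> H) G" by (rule subgroups_Inter_pair[OF sS sH])
  have sSK: "subgroup (S \<inter> K) G" by (rule subgroups_Inter_pair[OF sS sK])
  have sRH: "subgroup (R \<inter> H) G" by (rule subgroups_Inter_pair[OF sR sH])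
  have nSH: "S \<inter> H \<lhd> G\<lparr>carrier := S\<rparr>"
  proof -
    have "\<forall>x\<in>S. \<forall>h\<in>S \<inter> H. x \<otimes> h \<otimes> inv x \<in> S \<inter> H"
    proof (intro ballI)
      fix x h assume x: "x \<in> S" and h: "h \<in> S \<inter> H"
      have "x \<otimes> h \<otimes> inv x \<in> S"
        using x h subgroup.m_closed[OF sS] subgroup.m_inv_closed[OF sS] by simp
      moreover have "x \<otimes> h \<otimes> inv x \<in> H" using nconj[OF H scarr[OF sS x]] h by simp
      ultimately show "x \<otimes> h \<otimes> inv x \<in> S \<inter> H" by simp
    qed
    then show ?thesis using sub_normal_iff[OF sS] sSH by blast
  qed
  define XX where "XX = (S \<inter> H) <#> K"
  have sX: "subgroup XX G" unfolding XX_def by (rule normal_mult_subgroup[OF K sSH])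
  have sSK': "subgroup (S <#> K) G" by (rule normal_mult_subgroup[OF K sS])
  have nX: "XX \<lhd> G\<lparr>carrier := S <#> K\<rparr>" unfolding XX_def by (rule normal_mult_normal[OF K sS nSH])
  have KX: "K \<subseteq> XX"
  proof
    fix k assume "k \<in> K"
    then have "k = \<one> \<otimes> k" "\<one> \<in> S \<inter> H" using ncarr[OF K] subgroup.one_closed[OF sSH] by auto
    then show "k \<in> XX" unfolding XX_def mem_set_mult using \<open>k \<in> K\<close> by blast
  qed
  have SHX: "S \<inter> H \<subseteq> XX"
  proof
    fix x assume "x \<in> S \<inter> H"
    then have "x = x \<otimes> \<one>" "\<one> \<in> K" using scarr[OF sSH] subgroup.one_closed[OF sK] by auto
    then show "x \<in> XX" unfolding XX_def mem_set_mult using \<open>x \<in> S \<inter> H\<close> by blast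
  qed
  have KSK: "K \<subseteq> S <#> K"
  proof
    fix k assume "k \<in> K"
    then have "k = \<one> \<otimes> k" "\<one> \<in> S" using ncarr[OF K] subgroup.one_closed[OF sS] by auto
    then show "k \<in> S <#> K" unfolding mem_set_mult using \<open>k \<in> K\<close> by blast
  qed
  have QX: "Q (card XX div card K)"
  proof -
    interpret GS: group "G\<lparr>carrier := S\<rparr>" by (rule subgroup_imp_group[OF sS])
    have sSH_S: "subgroup (S \<inter> H) (G\<lparr>carrier := S\<rparr>)" by (rule subgroup_incl[OF sSH sS]) auto
    have "subgroup ((S \<inter> H) <#>\<^bsub>G\<lparr>carrier := S\<rparr>\<^esub> R) (G\<lparr>carrier := S\<rparr>)"
      by (rule GS.normal_mult_subgroup[OF RS sSH_S])
    then have sM: "subgroup ((S \<inter> H) <#> R) G" and MS: "(S \<inter> H) <#> R \<subseteq> S"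
      using incl_subgroup[OF sS] subgroup.subset by fastforce+
    have c1: "card XX * card (S \<inter> K) = card (S \<inter> H) * card K"
    proof -
      have "S \<inter> H \<inter> K = S \<inter> K" using KH by blast
      then show ?thesis using prod_card[OF fin sSH sK] unfolding XX_def by simp
    qed
    have c2: "card ((S \<inter> H) <#> R) * card (R \<inter> H) = card (S \<inter> H) * card R"
    proof -
      have "S \<inter> H \<inter> R = R \<inter> H" using RSs by blast
      then show ?thesis using prod_card[OF fin sSH sR] by simp
    qed
    obtain t where t: "card (S \<inter> H) = card (S \<inter> K) * t"
      using card_subgroup_dvd[OF fin sSK sSH] KH by (auto elim!: dvdE)
    have RHSK: "R \<inter> H \<subseteq> S \<inter> K" using below RSs unfolding R_def by blast
    obtain u where u: "card (S \<inter> K) = card (R \<inter> H) * u"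
      using card_subgroup_dvd[OF fin sRH sSK RHSK] by (auto elim!: dvdE)
    have RM: "R \<subseteq> (S \<inter> H) <#> R"
    proof
      fix x assume "x \<in> R"
      then have "x = \<one> \<otimes> x" "\<one> \<in> S \<inter> H" using scarr[OF sR] subgroup.one_closed[OF sSH] by auto
      then show "x \<in> (S \<inter> H) <#> R" unfolding mem_set_mult using \<open>x \<in> R\<close> by blast
    qed
    obtain v where v: "card ((S \<inter> H) <#> R) = card R * v"
      using card_subgroup_dvd[OF fin sR sM RM] by (auto elim!: dvdE)
    obtain w where w: "card S = card ((S \<inter> H) <#> R) * w"
      using card_subgroup_dvd[OF fin sM sS MS] by (auto elim!: dvdE)
    have pR: "card R > 0" by (rule card_subgroup_pos[OF fin sR])
    have pRH: "card (R \<inter> H) > 0" by (rule card_subgroup_pos[OF fin sRH])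
    have pSK: "card (S \<inter> K) > 0" by (rule card_subgroup_pos[OF fin sSK])
    have pK: "card K > 0" by (rule card_subgroup_pos[OF fin sK])
    have "card R * v * card (R \<inter> H) = card (R \<inter> H) * u * t * card R"
      using c2 t u v by (simp add: ac_simps)
    then have vut: "v = u * t" using pR pRH by (simp add: ac_simps)
    have "factor_order S R = v * w" unfolding factor_order_def using w v pR by simp
    then have "t dvd factor_order S R" using vut by simp
    then have Qt: "Q t" using Q qf unfolding nice_def S_def R_def by blast
    have "card XX * card (S \<inter> K) = t * card K * card (S \<inter> K)" using c1 t by (simp add: ac_simps)
    then have "card XX = t * card K" using pSK by simp
    then show ?thesis using Qt pK by simp
  qed
  have gX: "good G Q K (S <#> K) XX" unfolding good_def using nX KX QX by simp
  define n where "n = length Gs - 1"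
  have jn: "Suc i \<le> n" using j unfolding n_def by simp
  have chain: "XX \<subseteq> Omax G Q K (Gs ! l <#> K)" if "Suc i \<le> l" "l \<le> n" for l
    using that
  proof (induction l rule: dec_induct)
    case base
    show ?case using Omax_max[OF fin K sSK' KSK Q gX] unfolding S_def .
  next
    case (step m)
    have m: "Suc m < length Gs" using step n_def by simp
    have sm: "subgroup (Gs ! m) G" and sm1: "subgroup (Gs ! Suc m) G" using sg m by auto
    have nm: "Gs ! m \<lhd> G\<lparr>carrier := Gs ! Suc m\<rparr>" using nrm m by auto
    have "Gs ! m <#> K \<lhd> G\<lparr>carrier := Gs ! Suc m <#> K\<rparr>" by (rule normal_mult_normal[OF K sm1 nm])
    moreover have "subgroup (Gs ! m <#> K) G" by (rule normal_mult_subgroup[OF K sm])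
    moreover have "subgroup (Gs ! Suc m <#> K) G" by (rule normal_mult_subgroup[OF K sm1])
    moreover have "K \<subseteq> Gs ! m <#> K"
    proof
      fix k assume "k \<in> K"
      then have "k = \<one> \<otimes> k" "\<one> \<in> Gs ! m" using ncarr[OF K] subgroup.one_closed[OF sm] by auto
      then show "k \<in> Gs ! m <#> K" unfolding mem_set_mult using \<open>k \<in> K\<close> by blast
    qed
    ultimately have "Omax G Q K (Gs ! m <#> K) \<subseteq> Omax G Q K (Gs ! Suc m <#> K)"
      using Omax_step[OF fin K _ _ Q] by blast
    moreover have "m \<le> n" using step by simp
    ultimately show ?case using step by blast
  qed
  have XO: "XX \<subseteq> Omax G Q K (carrier G)"
    using chain[OF jn order.refl] last carrier_mult_K[OF K] unfolding n_def by simp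
  let ?O = "Omax G Q K (carrier G)"
  have gO: "good G Q K (carrier G) ?O" using Omax_ex[OF fin K subgroup_self _ Q] subgroup.subset[OF sK] by blast
  have nO: "?O \<lhd> G" and KO: "K \<subseteq> ?O" and QO: "Q (card ?O div card K)"
    using gO normal_in_self_iff unfolding good_def by auto
  have nOH: "?O \<inter> H \<lhd> G" by (rule normal_subgroup_intersect[OF nO H])
  have "\<not> S \<inter> H \<subseteq> K" using above unfolding S_def .
  then have "\<not> ?O \<inter> H \<subseteq> K" using SHX XO by blast
  moreover have "K \<subseteq> ?O \<inter> H" using KO KH by blast
  ultimately have "K \<subset> ?O \<inter> H" by blast
  then have "\<not> ?O \<inter> H \<subset> H" using nomid[OF nOH] by blast
  then have HO: "H \<subseteq> ?O" by blast
  have sO: "subgroup ?O G" using nO normal_imp_subgroup by blast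
  obtain a where a: "card H = card K * a" using card_subgroup_dvd[OF fin sK sH] KH by (auto elim!: dvdE)
  obtain b where b: "card ?O = card H * b" using card_subgroup_dvd[OF fin sH sO HO] by (auto elim!: dvdE)
  have pK: "card K > 0" by (rule card_subgroup_pos[OF fin sK])
  have "card ?O div card K = a * b" using a b pK by (simp add: ac_simps)
  then have "Q a" using QO Q unfolding nice_def by (metis dvd_triv_left)
  then show ?thesis unfolding factor_order_def using a pK by simp
qed

end



context group begin

lemma chief_ppow:
  assumes fin: "finite (carrier G)" and p: "Factorial_Ring.prime p" and ps: "p_solvable p G"
    and ch: "chief_factor G H K" and dv: "p dvd factor_order H K"
  shows "\<exists>k. factor_order H K = p ^ k"
proof -
  obtain Gs where Gs: "Gs \<noteq> []" "hd Gs = {\<one>}" "last Gs = carrier G"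
    "\<forall>i < length Gs. subgroup (Gs ! i) G"
    "\<forall>i. Suc i < length Gs \<longrightarrow> Gs ! i \<lhd> G\<lparr>carrier := Gs ! Suc i\<rparr> \<and>
           ((\<exists>k. factor_order (Gs ! Suc i) (Gs ! i) = p ^ k) \<or>
            coprime (factor_order (Gs ! Suc i) (Gs ! i)) p)"
    using ps unfolding p_solvable_def by blast
  have K: "K \<lhd> G" and H: "H \<lhd> G" and KH: "K \<subset> H"
    using ch unfolding chief_factor_def by blast+
  have len: "length Gs > 0" using Gs(1) by simp
  have lastc: "Gs ! (length Gs - 1) = carrier G" using Gs(1,3) by (simp add: last_conv_nth)
  have hd0: "Gs ! 0 = {\<one>}" using Gs(1,2) by (simp add: hd_conv_nth)
  define P where "P j \<longleftrightarrow> j < length Gs \<and> \<not> Gs ! j \<inter> H \<subseteq> K" for j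
  have ex: "P (length Gs - 1)" unfolding P_def using lastc KH len subgroup.subset[OF normal_imp_subgroup[OF H]] by auto
  define j where "j = (LEAST j. P j)"
  have Pj: "P j" unfolding j_def by (rule LeastI[of P, OF ex])
  have minj: "\<And>l. l < j \<Longrightarrow> \<not> P l" unfolding j_def by (rule not_less_Least)
  have "j \<noteq> 0"
  proof
    assume "j = 0"
    then have "\<not> {\<one>} \<inter> H \<subseteq> K" using Pj hd0 unfolding P_def by simp
    moreover have "\<one> \<in> K" using subgroup.one_closed[OF normal_imp_subgroup[OF K]] .
    ultimately show False by blast
  qed
  then obtain i where ji: "j = Suc i" using not0_implies_Suc by blast
  have jl: "Suc i < length Gs" and above: "\<not> Gs ! Suc i \<inter> H \<subseteq> K" using Pj ji unfolding P_def by auto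
  have below: "Gs ! i \<inter> H \<subseteq> K" using minj[of i] ji jl unfolding P_def by auto
  have sg: "\<forall>i < length Gs. subgroup (Gs ! i) G" using Gs(4) .
  have nrm: "\<forall>i. Suc i < length Gs \<longrightarrow> Gs ! i \<lhd> G\<lparr>carrier := Gs ! Suc i\<rparr>" using Gs(5) by blast
  have "(\<exists>k. factor_order (Gs ! Suc i) (Gs ! i) = p ^ k) \<or> coprime (factor_order (Gs ! Suc i) (Gs ! i)) p"
    using Gs(5) jl by blast
  then show ?thesis
  proof
    assume "\<exists>k. factor_order (Gs ! Suc i) (Gs ! i) = p ^ k"
    then show ?thesis
      using chief_Q[OF fin len lastc sg nrm ch nice_ppow[OF p] jl below above] by blast
  next
    assume "coprime (factor_order (Gs ! Suc i) (Gs ! i)) p"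
    then have "coprime (factor_order H K) p"
      using chief_Q[OF fin len lastc sg nrm ch nice_cop jl below above] by blast
    then have "p dvd 1" using dv by (meson coprime_common_divisor dvd_refl)
    then show ?thesis using p by auto
  qed
qed

end



lemma (in group_action) fixed_point_exists:
  assumes fin: "finite (carrier G)" and finE: "finite E" and cG: "card (carrier G) = p ^ a"
    and p: "Factorial_Ring.prime p" and nd: "\<not> p dvd card E"
  shows "\<exists>x\<in>E. \<forall>g\<in>carrier G. \<phi> g x = x"
proof (rule ccontr)
  assume nfix: "\<not> (\<exists>x\<in>E. \<forall>g\<in>carrier G. \<phi> g x = x)"
  have orbdvd: "p dvd card orb" if orb: "orb \<in> orbits G E \<phi>" for orb
  proof -
    obtain x where x: "x \<in> E" and ox: "orb = orbit G \<phi> x" using orb unfolding orbits_def by blast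
    have "card (orbit G \<phi> x) * card (stabilizer G \<phi> x) = p ^ a"
      using orbit_stabilizer_theorem[OF x] cG unfolding order_def by simp
    then have "card (orbit G \<phi> x) dvd p ^ a" by (metis dvd_triv_left)
    then obtain i where i: "card (orbit G \<phi> x) = p ^ i" using divides_primepow_nat[OF p] by blast
    show ?thesis
    proof (cases i)
      case 0
      then have c1: "card (orbit G \<phi> x) = 1" using i by simp
      have xo: "x \<in> orbit G \<phi> x" by (rule orbit_refl[OF x])
      have "orbit G \<phi> x = {x}" using c1 xo by (metis card_1_singletonE singletonD)
      then have "\<forall>g\<in>carrier G. \<phi> g x = x" unfolding orbit_def by blast
      then show ?thesis using nfix x by blast
    next
      case (Suc k)
      then show ?thesis using i ox by simp
    qed
  qed
  have "(\<Sum>orb\<in>orbits G E \<phi>. \<Sum>x\<in>orb. (1::nat)) = (\<Sum>x\<in>E. 1)" by (rule disjoint_sum[OF finE])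
  then have "(\<Sum>orb\<in>orbits G E \<phi>. card orb) = card E" by simp
  moreover have "p dvd (\<Sum>orb\<in>orbits G E \<phi>. card orb)" using orbdvd by (simp add: dvd_sum)
  ultimately show False using nd by simp
qed




context group begin

lemma rcos_mem_eq:
  assumes sP: "subgroup P G" and x: "x \<in> carrier G" and t: "t \<in> carrier G"
    and eq: "P #> x #> t = P #> x"
  shows "x \<otimes> t \<otimes> inv x \<in> P"
proof -
  have Pc: "P \<subseteq> carrier G" by (rule subgroup.subset[OF sP])
  have "P #> x #> t = P #> (x \<otimes> t)" by (rule coset_mult_assoc[OF Pc x t])
  moreover have "x \<otimes> t \<in> P #> (x \<otimes> t)" by (rule rcos_self[OF _ sP]) (use x t in simp)
  ultimately have "x \<otimes> t \<in> P #> x" using eq by simp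
  then obtain h where h: "h \<in> P" "x \<otimes> t = h \<otimes> x" unfolding r_coset_def by blast
  have hc: "h \<in> carrier G" using h Pc by auto
  have "x \<otimes> t \<otimes> inv x = h" using h(2) hc x t by (simp add: gs)
  then show ?thesis using h by simp
qed

lemma conj_into:
  assumes fin: "finite (carrier G)" and sC: "subgroup C G" and sP: "subgroup P G"
    and PC: "P \<subseteq> C" and cP: "card P = p ^ e" and p: "Factorial_Ring.prime p"
    and nd: "\<not> p dvd card (rcosets\<^bsub>G\<lparr>carrier := C\<rparr>\<^esub> P)"
    and g: "g \<in> carrier G" and gC: "\<forall>y\<in>P. g \<otimes> y \<otimes> inv g \<in> C"
  shows "\<exists>x\<in>C. \<forall>y\<in>P. (x \<otimes> g) \<otimes> y \<otimes> inv (x \<otimes> g) \<in> P"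
proof -
  define E where "E = rcosets\<^bsub>G\<lparr>carrier := C\<rparr>\<^esub> P"
  have E: "E = (\<Union>c\<in>C. {P #> c})" unfolding E_def RCOSETS_def by simp
  have Pc: "P \<subseteq> carrier G" by (rule subgroup.subset[OF sP])
  define t where "t y = g \<otimes> inv y \<otimes> inv g" for y
  have tC: "t y \<in> C" if "y \<in> P" for y
    unfolding t_def using gC subgroup.m_inv_closed[OF sP that] by blast
  have tc: "t y \<in> carrier G" if "y \<in> P" for y using tC[OF that] scarr[OF sC] by blast
  define phi where "phi y = (\<lambda>S\<in>E. S #> t y)" for y
  have mapE: "S #> c \<in> E" if SE: "S \<in> E" and cC: "c \<in> C" for S c
  proof -
    obtain d where d: "d \<in> C" "S = P #> d" using SE E by blast
    have "S #> c = P #> (d \<otimes> c)" using coset_mult_assoc[OF Pc scarr[OF sC d(1)] scarr[OF sC cC]] d by simp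
    moreover have "d \<otimes> c \<in> C" by (rule subgroup.m_closed[OF sC d(1) cC])
    ultimately show ?thesis using E by blast
  qed
  have Esub: "S \<subseteq> carrier G" if "S \<in> E" for S
    using that E r_coset_subset_G[OF Pc] scarr[OF sC] by blast
  have bk: "S #> c #> inv c = S" if "S \<in> E" "c \<in> carrier G" for S c
    using coset_mult_assoc[OF Esub[OF that(1)] that(2) inv_closed[OF that(2)]] that
      coset_mult_one[OF Esub[OF that(1)]] by simp
  have phiB: "phi y \<in> Bij E" if y: "y \<in> P" for y
  proof -
    have "bij_betw (\<lambda>S. S #> t y) E E"
    proof (rule bij_betw_byWitness[where f' = "\<lambda>S. S #> inv (t y)"])
      show "\<forall>S\<in>E. S #> t y #> inv (t y) = S" using bk tc[OF y] by blast
      show "\<forall>S\<in>E. S #> inv (t y) #> t y = S"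
        using bk[of _ "inv (t y)"] tc[OF y] by simp
      show "(\<lambda>S. S #> t y) ` E \<subseteq> E" using mapE tC[OF y] by blast
      show "(\<lambda>S. S #> inv (t y)) ` E \<subseteq> E"
        using mapE subgroup.m_inv_closed[OF sC tC[OF y]] by blast
    qed
    then have "bij_betw (phi y) E E" unfolding phi_def by (rule bij_betw_cong[THEN iffD1, rotated]) simp
    then show ?thesis unfolding Bij_def phi_def by simp
  qed
  have tmult: "t (y1 \<otimes> y2) = t y2 \<otimes> t y1" if "y1 \<in> P" "y2 \<in> P" for y1 y2
    unfolding t_def using that Pc g by (simp add: gs subset_iff)
  interpret A: group "G\<lparr>carrier := P\<rparr>" by (rule subgroup_imp_group[OF sP])
  have hom: "phi \<in> hom (G\<lparr>carrier := P\<rparr>) (BijGroup E)"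
  proof (rule homI)
    fix y assume "y \<in> carrier (G\<lparr>carrier := P\<rparr>)"
    then show "phi y \<in> carrier (BijGroup E)" using phiB by (simp add: BijGroup_def)
  next
    fix y1 y2 assume y: "y1 \<in> carrier (G\<lparr>carrier := P\<rparr>)" "y2 \<in> carrier (G\<lparr>carrier := P\<rparr>)"
    then have y': "y1 \<in> P" "y2 \<in> P" by auto
    have "phi (y1 \<otimes> y2) = compose E (phi y1) (phi y2)"
    proof (rule ext)
      fix S show "phi (y1 \<otimes> y2) S = compose E (phi y1) (phi y2) S"
      proof (cases "S \<in> E")
        case True
        have "S #> t y2 \<in> E" using mapE[OF True tC[OF y'(2)]] .
        moreover have "S #> t y2 #> t y1 = S #> (t y2 \<otimes> t y1)"
          by (rule coset_mult_assoc[OF Esub[OF True] tc[OF y'(2)] tc[OF y'(1)]])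
        ultimately show ?thesis using True tmult[OF y'] unfolding phi_def compose_def by simp
      next
        case False
        then show ?thesis unfolding phi_def compose_def by simp
      qed
    qed
    then show "phi (y1 \<otimes>\<^bsub>G\<lparr>carrier := P\<rparr>\<^esub> y2) = phi y1 \<otimes>\<^bsub>BijGroup E\<^esub> phi y2"
      using phiB[OF y'(1)] phiB[OF y'(2)] by (simp add: BijGroup_def)
  qed
  have act: "group_action (G\<lparr>carrier := P\<rparr>) E phi"
    unfolding group_action_def group_hom_def group_hom_axioms_def
    using A.is_group group_BijGroup hom by simp
  have finE: "finite E"
  proof -
    have "E \<subseteq> Pow (carrier G)" using Esub by blast
    then show ?thesis using fin finite_subset by blast
  qed
  have finP: "finite (carrier (G\<lparr>carrier := P\<rparr>))" using Pc fin finite_subset by auto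
  obtain S where S: "S \<in> E" and fx: "\<forall>y\<in>P. phi y S = S"
  proof -
    have "card (carrier (G\<lparr>carrier := P\<rparr>)) = p ^ e" using cP by simp
    from group_action.fixed_point_exists[OF act finP finE this p] nd
    show ?thesis using that unfolding E_def by auto
  qed
  obtain x where x: "x \<in> C" "S = P #> x" using S E by blast
  have xc: "x \<in> carrier G" by (rule scarr[OF sC x(1)])
  have "\<forall>y\<in>P. (x \<otimes> g) \<otimes> y \<otimes> inv (x \<otimes> g) \<in> P"
  proof
    fix y assume y: "y \<in> P"
    have iy: "inv y \<in> P" by (rule subgroup.m_inv_closed[OF sP y])
    have yc: "y \<in> carrier G" using y Pc by auto
    have "P #> x #> t (inv y) = P #> x" using fx iy S x unfolding phi_def by simp
    then have "x \<otimes> t (inv y) \<otimes> inv x \<in> P" by (rule rcos_mem_eq[OF sP xc tc[OF iy]])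
    moreover have "x \<otimes> t (inv y) \<otimes> inv x = (x \<otimes> g) \<otimes> y \<otimes> inv (x \<otimes> g)"
      unfolding t_def using xc yc g by (simp add: gs)
    ultimately show "(x \<otimes> g) \<otimes> y \<otimes> inv (x \<otimes> g) \<in> P" by simp
  qed
  then show ?thesis using x(1) by blast
qed

end



context group begin

lemma conj_set_eq:
  assumes "P \<subseteq> carrier G" "n \<in> carrier G"
  shows "n <# P #> inv n = (\<lambda>y. n \<otimes> y \<otimes> inv n) ` P"
  unfolding l_coset_def r_coset_def by auto

lemma normalizer_iff:
  assumes fin: "finite (carrier G)" and Pc: "P \<subseteq> carrier G"
  shows "n \<in> normalizer G P \<longleftrightarrow> n \<in> carrier G \<and> (\<forall>y\<in>P. n \<otimes> y \<otimes> inv n \<in> P)"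
proof -
  have "n \<in> normalizer G P \<longleftrightarrow> n \<in> carrier G \<and> n <# P #> inv n = P"
    unfolding normalizer_def stabilizer_def using Pc by auto
  also have "\<dots> \<longleftrightarrow> n \<in> carrier G \<and> (\<forall>y\<in>P. n \<otimes> y \<otimes> inv n \<in> P)"
  proof (cases "n \<in> carrier G")
    case True
    have eq: "n <# P #> inv n = (\<lambda>y. n \<otimes> y \<otimes> inv n) ` P" by (rule conj_set_eq[OF Pc True])
    have cd: "card ((\<lambda>y. n \<otimes> y \<otimes> inv n) ` P) = card P" by (rule conj_image_card[OF Pc True])
    have finP: "finite P" using Pc fin finite_subset by blast
    show ?thesis
    proof
      assume "n \<in> carrier G \<and> n <# P #> inv n = P"
      then show "n \<in> carrier G \<and> (\<forall>y\<in>P. n \<otimes> y \<otimes> inv n \<in> P)" using eq by auto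
    next
      assume "n \<in> carrier G \<and> (\<forall>y\<in>P. n \<otimes> y \<otimes> inv n \<in> P)"
      then have sub: "(\<lambda>y. n \<otimes> y \<otimes> inv n) ` P \<subseteq> P" by auto
      have "(\<lambda>y. n \<otimes> y \<otimes> inv n) ` P = P" by (rule card_seteq[OF finP sub]) (simp add: cd)
      then show "n \<in> carrier G \<and> n <# P #> inv n = P" using eq True by simp
    qed
  qed simp
  finally show ?thesis .
qed

definition cent :: "'a set \<Rightarrow> 'a set \<Rightarrow> 'a set" where
  "cent H K = {c \<in> carrier G. \<forall>h\<in>H. c \<otimes> h \<otimes> inv c \<otimes> inv h \<in> K}"

lemma cent_normal:
  assumes K: "K \<lhd> G" and H: "H \<lhd> G"
  shows "cent H K \<lhd> G"
proof -
  have sK: "subgroup K G" using K normal_imp_subgroup by blast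
  have Hc: "\<And>h. h \<in> H \<Longrightarrow> h \<in> carrier G" using ncarr[OF H] .
  have Kc: "\<And>h. h \<in> K \<Longrightarrow> h \<in> carrier G" using ncarr[OF K] .
  have sub: "subgroup (cent H K) G"
  proof (rule subgroupI)
    show "cent H K \<subseteq> carrier G" unfolding cent_def by auto
    have "\<one> \<in> cent H K" unfolding cent_def using Hc subgroup.one_closed[OF sK] by auto
    then show "cent H K \<noteq> {}" by blast
  next
    fix c assume c: "c \<in> cent H K"
    have cc: "c \<in> carrier G" using c unfolding cent_def by auto
    have "inv c \<otimes> h \<otimes> inv (inv c) \<otimes> inv h \<in> K" if h: "h \<in> H" for h
    proof -
      define h' where "h' = inv c \<otimes> h \<otimes> c"
      have h'H: "h' \<in> H" unfolding h'_def using nconj'[OF H cc h] .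
      have h'c: "h' \<in> carrier G" using Hc[OF h'H] .
      have k: "c \<otimes> h' \<otimes> inv c \<otimes> inv h' \<in> K" using c h'H unfolding cent_def by auto
      have "c \<otimes> h' \<otimes> inv c \<otimes> inv h' = h \<otimes> inv h'" unfolding h'_def using cc Hc[OF h] by (simp add: gs)
      then have "inv (h \<otimes> inv h') \<in> K" using k subgroup.m_inv_closed[OF sK] by simp
      moreover have "inv (h \<otimes> inv h') = inv c \<otimes> h \<otimes> inv (inv c) \<otimes> inv h"
        unfolding h'_def using cc Hc[OF h] by (simp add: gs)
      ultimately show ?thesis by simp
    qed
    then show "inv c \<in> cent H K" unfolding cent_def using cc by auto
  next
    fix c d assume c: "c \<in> cent H K" and d: "d \<in> cent H K"
    have cc: "c \<in> carrier G" and dc: "d \<in> carrier G" using c d unfolding cent_def by auto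
    have "c \<otimes> d \<otimes> h \<otimes> inv (c \<otimes> d) \<otimes> inv h \<in> K" if h: "h \<in> H" for h
    proof -
      have k2: "d \<otimes> h \<otimes> inv d \<otimes> inv h \<in> K" using d h unfolding cent_def by auto
      have k1: "c \<otimes> h \<otimes> inv c \<otimes> inv h \<in> K" using c h unfolding cent_def by auto
      have k3: "c \<otimes> (d \<otimes> h \<otimes> inv d \<otimes> inv h) \<otimes> inv c \<in> K" by (rule nconj[OF K cc k2])
      have "(c \<otimes> (d \<otimes> h \<otimes> inv d \<otimes> inv h) \<otimes> inv c) \<otimes> (c \<otimes> h \<otimes> inv c \<otimes> inv h) \<in> K"
        by (rule subgroup.m_closed[OF sK k3 k1])
      moreover have "(c \<otimes> (d \<otimes> h \<otimes> inv d \<otimes> inv h) \<otimes> inv c) \<otimes> (c \<otimes> h \<otimes> inv c \<otimes> inv h) = c \<otimes> d \<otimes> h \<otimes> inv (c \<otimes> d) \<otimes> inv h"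
        using cc dc Hc[OF h] by (simp add: gs)
      ultimately show ?thesis by simp
    qed
    then show "c \<otimes> d \<in> cent H K" unfolding cent_def using cc dc by auto
  qed
  have "g \<otimes> c \<otimes> inv g \<in> cent H K" if g: "g \<in> carrier G" and c: "c \<in> cent H K" for g c
  proof -
    have cc: "c \<in> carrier G" using c unfolding cent_def by auto
    have "g \<otimes> c \<otimes> inv g \<otimes> h \<otimes> inv (g \<otimes> c \<otimes> inv g) \<otimes> inv h \<in> K" if h: "h \<in> H" for h
    proof -
      define h' where "h' = inv g \<otimes> h \<otimes> g"
      have h'H: "h' \<in> H" unfolding h'_def using nconj'[OF H g h] .
      have k: "c \<otimes> h' \<otimes> inv c \<otimes> inv h' \<in> K" using c h'H unfolding cent_def by auto
      have "g \<otimes> (c \<otimes> h' \<otimes> inv c \<otimes> inv h') \<otimes> inv g \<in> K" by (rule nconj[OF K g k])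
      moreover have "g \<otimes> (c \<otimes> h' \<otimes> inv c \<otimes> inv h') \<otimes> inv g = g \<otimes> c \<otimes> inv g \<otimes> h \<otimes> inv (g \<otimes> c \<otimes> inv g) \<otimes> inv h"
        unfolding h'_def using cc g Hc[OF h] by (simp add: gs)
      ultimately show ?thesis by simp
    qed
    then show ?thesis unfolding cent_def using g cc by auto
  qed
  then show ?thesis using sub normal_inv_iff by blast
qed

end



lemma val_arith:
  fixes p :: nat
  assumes p: "Factorial_Ring.prime p" and n0: "n \<noteq> 0" and k0: "k \<noteq> 0"
    and hd: "h dvd n" and eq: "h * p ^ c = p ^ e * k * p ^ a" and en: "multiplicity p n = e"
    and dk: "p ^ d dvd k"
  shows "a + d \<le> c"
proof -
  have pe: "prime_elem p" using p by (rule prime_imp_prime_elem)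
  have nu: "\<not> is_unit p" by (rule prime_elem_not_unit[OF pe])
  have p0: "p \<noteq> 0" using p by auto
  have h0: "h \<noteq> 0" using hd n0 by auto
  have vh: "multiplicity p h \<le> e" using dvd_imp_multiplicity_le[where p=p, OF hd n0] en by simp
  have "multiplicity p (h * p ^ c) = multiplicity p h + c"
  proof -
    have "p ^ c \<noteq> 0" using p0 by simp
    then show ?thesis using prime_elem_multiplicity_mult_distrib[OF pe h0, of "p ^ c"] pe by simp
  qed
  moreover have "multiplicity p (p ^ e * k * p ^ a) = e + multiplicity p k + a"
  proof -
    have a1: "p ^ e \<noteq> 0" "p ^ a \<noteq> 0" using p0 by simp_all
    then have a2: "p ^ e * k \<noteq> 0" using k0 by simp
    show ?thesis using prime_elem_multiplicity_mult_distrib[OF pe a2 a1(2)]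
        prime_elem_multiplicity_mult_distrib[OF pe a1(1) k0] pe by simp
  qed
  ultimately have "multiplicity p h + c = e + multiplicity p k + a" using eq by simp
  moreover have "d \<le> multiplicity p k" by (rule multiplicity_geI[OF k0 nu dk])
  ultimately show ?thesis using vh by simp
qed

context group begin

lemma stepB:
  assumes fin: "finite (carrier G)" and p: "Factorial_Ring.prime p" and sP: "subgroup P G"
    and cP: "card P = p ^ multiplicity p (order G)"
    and K: "K \<lhd> G" and H: "H \<lhd> G" and KH: "K \<subseteq> H" and fa: "card H div card K = p ^ a"
  shows "(H \<inter> P) <#> K = H"
proof -
  let ?e = "multiplicity p (order G)"
  let ?S = "H \<inter> P"
  have sK: "subgroup K G" and sH: "subgroup H G" using K H normal_imp_subgroup by auto
  have sS: "subgroup ?S G" by (rule subgroups_Inter_pair[OF sH sP])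
  have sKP: "subgroup (K \<inter> P) G" by (rule subgroups_Inter_pair[OF sK sP])
  have sPH: "subgroup (P <#> H) G" by (rule normal_mult_subgroup[OF H sP])
  have sSK: "subgroup (?S <#> K) G" by (rule normal_mult_subgroup[OF K sS])
  have k0: "card K > 0" by (rule card_subgroup_pos[OF fin sK])
  have n0: "order G \<noteq> 0" using card_subgroup_pos[OF fin subgroup_self] unfolding order_def by simp
  obtain f where f: "card H = card K * f" using card_subgroup_dvd[OF fin sK sH KH] by (auto elim!: dvdE)
  have Hk: "card H = card K * p ^ a" using f fa k0 by simp
  have c1: "card (P <#> H) * card (P \<inter> H) = card P * card H" by (rule prod_card[OF fin sP sH])
  have hd: "card (P <#> H) dvd order G"
    using card_subgroup_dvd[OF fin sPH subgroup_self subgroup.subset[OF sPH]] unfolding order_def .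
  have "card ?S dvd card P" by (rule card_subgroup_dvd[OF fin sS sP]) auto
  then obtain c where c: "card ?S = p ^ c" using cP divides_primepow_nat[OF p] by auto
  have "card (K \<inter> P) dvd card P" by (rule card_subgroup_dvd[OF fin sKP sP]) auto
  then obtain d where d: "card (K \<inter> P) = p ^ d" using cP divides_primepow_nat[OF p] by auto
  have dk: "p ^ d dvd card K" using card_subgroup_dvd[OF fin sKP sK] d by auto
  have "card (P <#> H) * p ^ c = p ^ ?e * card K * p ^ a"
    using c1 c cP Hk by (simp add: Int_commute ac_simps)
  then have ad: "a + d \<le> c" using val_arith[OF p n0 _ hd _ refl dk] k0 by simp
  have p1: "p > 0" using p prime_gt_0_nat by blast
  have "p ^ (a + d) \<le> p ^ c" using ad p1 by (simp add: power_increasing)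
  then have le1: "p ^ a * p ^ d \<le> p ^ c" by (simp add: power_add)
  have c2: "card (?S <#> K) * card (?S \<inter> K) = card ?S * card K" by (rule prod_card[OF fin sS sK])
  have "?S \<inter> K = K \<inter> P" using KH by blast
  then have "card (?S <#> K) * p ^ d = p ^ c * card K" using c2 c d by simp
  moreover have "card H * p ^ d \<le> p ^ c * card K" using le1 Hk
    by (metis mult.assoc mult.commute mult_le_mono1)
  ultimately have "card H * p ^ d \<le> card (?S <#> K) * p ^ d" by simp
  then have geH: "card H \<le> card (?S <#> K)" using p1 by simp
  have SKH: "?S <#> K \<subseteq> H"
  proof
    fix x assume "x \<in> ?S <#> K"
    then obtain s k where "s \<in> H" "k \<in> K" "x = s \<otimes> k" unfolding mem_set_mult by blast
    then show "x \<in> H" using KH subgroup.m_closed[OF sH] by auto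
  qed
  have finH: "finite H" using subgroup.subset[OF sH] fin finite_subset by blast
  show ?thesis using card_seteq[OF finH SKH geH] .
qed

lemma P_in_cent:
  assumes K: "K \<lhd> G" and H: "H \<lhd> G" and sP: "subgroup P G"
    and comm: "comm_group (G\<lparr>carrier := P\<rparr>)" and HPK: "(H \<inter> P) <#> K = H"
  shows "P \<subseteq> cent H K"
proof
  fix y assume y: "y \<in> P"
  have yc: "y \<in> carrier G" by (rule scarr[OF sP y])
  have "y \<otimes> h \<otimes> inv y \<otimes> inv h \<in> K" if h: "h \<in> H" for h
  proof -
    have "h \<in> (H \<inter> P) <#> K" using h HPK by simp
    then obtain s k where sk: "s \<in> H \<inter> P" "k \<in> K" "h = s \<otimes> k" unfolding mem_set_mult by blast
    have sc: "s \<in> carrier G" using sk scarr[OF sP] by auto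
    have kc: "k \<in> carrier G" using ncarr[OF K sk(2)] .
    have "y \<otimes>\<^bsub>G\<lparr>carrier := P\<rparr>\<^esub> s = s \<otimes>\<^bsub>G\<lparr>carrier := P\<rparr>\<^esub> y"
      by (rule comm_monoid.m_comm[OF comm_group.axioms(1)[OF comm]]) (use y sk(1) in auto)
    then have ys: "y \<otimes> s = s \<otimes> y" by simp
    have sK: "subgroup K G" using K normal_imp_subgroup by blast
    have "y \<otimes> k \<otimes> inv y \<in> K" by (rule nconj[OF K yc sk(2)])
    then have k1: "y \<otimes> k \<otimes> inv y \<otimes> inv k \<in> K"
      by (rule subgroup.m_closed[OF sK _ subgroup.m_inv_closed[OF sK sk(2)]])
    have "s \<otimes> (y \<otimes> k \<otimes> inv y \<otimes> inv k) \<otimes> inv s \<in> K" by (rule nconj[OF K sc k1])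
    moreover have "s \<otimes> (y \<otimes> k \<otimes> inv y \<otimes> inv k) \<otimes> inv s = y \<otimes> h \<otimes> inv y \<otimes> inv h"
    proof -
      have "y \<otimes> h \<otimes> inv y \<otimes> inv h = (y \<otimes> s) \<otimes> (k \<otimes> inv y \<otimes> inv k \<otimes> inv s)"
        using sk(3) yc sc kc by (simp add: gs)
      also have "\<dots> = (s \<otimes> y) \<otimes> (k \<otimes> inv y \<otimes> inv k \<otimes> inv s)" using ys by simp
      also have "\<dots> = s \<otimes> (y \<otimes> k \<otimes> inv y \<otimes> inv k) \<otimes> inv s" using yc sc kc by (simp add: gs)
      finally show ?thesis by simp
    qed
    ultimately show ?thesis by simp
  qed
  then show "y \<in> cent H K" unfolding cent_def using yc by auto
qed

lemma frattini:
  assumes fin: "finite (carrier G)" and p: "Factorial_Ring.prime p" and sP: "subgroup P G"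
    and cP: "card P = p ^ multiplicity p (order G)"
    and C: "C \<lhd> G" and PC: "P \<subseteq> C" and g: "g \<in> carrier G"
  shows "\<exists>c\<in>C. \<exists>n\<in>normalizer G P. g = c \<otimes> n"
proof -
  let ?e = "multiplicity p (order G)"
  have sC: "subgroup C G" using C normal_imp_subgroup by blast
  interpret GC: group "G\<lparr>carrier := C\<rparr>" by (rule subgroup_imp_group[OF sC])
  have "subgroup P (G\<lparr>carrier := C\<rparr>)" by (rule subgroup_incl[OF sP sC PC])
  then have lg: "card (rcosets\<^bsub>G\<lparr>carrier := C\<rparr>\<^esub> P) * card P = card C"
    using GC.lagrange unfolding order_def by simp
  have n0: "order G \<noteq> 0" using card_subgroup_pos[OF fin subgroup_self] unfolding order_def by simp
  have nd: "\<not> p dvd card (rcosets\<^bsub>G\<lparr>carrier := C\<rparr>\<^esub> P)"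
  proof
    assume "p dvd card (rcosets\<^bsub>G\<lparr>carrier := C\<rparr>\<^esub> P)"
    then have "p * p ^ ?e dvd card C" using lg cP by (metis mult_dvd_mono dvd_refl)
    moreover have "card C dvd order G"
      using card_subgroup_dvd[OF fin sC subgroup_self subgroup.subset[OF sC]] unfolding order_def .
    ultimately have "p ^ Suc ?e dvd order G" by (simp add: dvd_trans)
    then have "Suc ?e \<le> ?e"
      using multiplicity_geI[OF n0] p by (metis not_prime_unit)
    then show False by simp
  qed
  have gC: "\<forall>y\<in>P. g \<otimes> y \<otimes> inv g \<in> C" using nconj[OF C g] PC by blast
  obtain x where x: "x \<in> C" and nx: "\<forall>y\<in>P. (x \<otimes> g) \<otimes> y \<otimes> inv (x \<otimes> g) \<in> P"
    using conj_into[OF fin sC sP PC cP p nd g gC] by blast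
  have xc: "x \<in> carrier G" by (rule scarr[OF sC x])
  have "x \<otimes> g \<in> normalizer G P"
    using normalizer_iff[OF fin subgroup.subset[OF sP]] nx xc g by simp
  moreover have "g = inv x \<otimes> (x \<otimes> g)" using xc g by simp
  moreover have "inv x \<in> C" by (rule subgroup.m_inv_closed[OF sC x])
  ultimately show ?thesis by blast
qed

end



lemma prime_order_cyclic:
  assumes Q: "group Q" and fin: "finite (carrier Q)" and p: "Factorial_Ring.prime p"
    and c: "card (carrier Q) = p"
  shows "cyclic_group Q"
proof -
  interpret Q: group Q by (rule Q)
  have p2: "p \<ge> 2" using p prime_ge_2_nat by blast
  have "carrier Q \<noteq> {\<one>\<^bsub>Q\<^esub>}" using c p2 by auto
  then obtain x where x: "x \<in> carrier Q" "x \<noteq> \<one>\<^bsub>Q\<^esub>" using Q.one_closed by blast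
  have sg: "subgroup (generate Q {x}) Q" using Q.generate_is_subgroup x by auto
  have xg: "x \<in> generate Q {x}" using Q.generate_incl x(1) by (auto intro: generate.incl)
  have og: "\<one>\<^bsub>Q\<^esub> \<in> generate Q {x}" using subgroup.one_closed[OF sg] .
  have fing: "finite (generate Q {x})" using subgroup.subset[OF sg] fin finite_subset by blast
  have "{x, \<one>\<^bsub>Q\<^esub>} \<subseteq> generate Q {x}" using xg og by auto
  then have "card {x, \<one>\<^bsub>Q\<^esub>} \<le> card (generate Q {x})" using fing card_mono by blast
  then have ge2: "card (generate Q {x}) \<ge> 2" using x(2) by simp
  have "card (generate Q {x}) dvd p"
    using Q.card_subgroup_dvd[OF fin sg Q.subgroup_self subgroup.subset[OF sg]] c by simp
  then have "card (generate Q {x}) = p" using ge2 p by (metis prime_nat_iff numeral_le_one_iff semiring_norm(69))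
  then have "generate Q {x} = carrier Q"
    using card_seteq[OF fin subgroup.subset[OF sg]] c by simp
  then have "subgroup_generated Q {x} = Q"
    unfolding subgroup_generated_def using x(1) by simp
  then show ?thesis unfolding cyclic_group_def using x(1) by blast
qed

context group begin

lemma factor_cyclic:
  assumes fin: "finite (carrier G)" and sH: "subgroup H G" and K: "K \<lhd> G\<lparr>carrier := H\<rparr>"
    and p: "Factorial_Ring.prime p" and fo: "factor_order H K = p"
  shows "cyclic_group ((G\<lparr>carrier := H\<rparr>) Mod K)"
proof -
  interpret GH: group "G\<lparr>carrier := H\<rparr>" by (rule subgroup_imp_group[OF sH])
  interpret NK: normal K "G\<lparr>carrier := H\<rparr>" by (rule K)
  have grp: "group ((G\<lparr>carrier := H\<rparr>) Mod K)" by (rule NK.factorgroup_is_group)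
  have sK: "subgroup K (G\<lparr>carrier := H\<rparr>)" by (rule NK.subgroup_axioms)
  have lg: "card (rcosets\<^bsub>G\<lparr>carrier := H\<rparr>\<^esub> K) * card K = card H"
    using GH.lagrange[OF sK] unfolding order_def by simp
  have KH: "K \<subseteq> H" using subgroup.subset[OF sK] by simp
  have finH: "finite H" using subgroup.subset[OF sH] fin finite_subset by blast
  have k0: "card K > 0" using finH KH subgroup.one_closed[OF sK] by (metis card_gt_0_iff empty_iff finite_subset)
  have cq: "card (carrier ((G\<lparr>carrier := H\<rparr>) Mod K)) = p"
  proof -
    have "card H div card K = card (rcosets\<^bsub>G\<lparr>carrier := H\<rparr>\<^esub> K)"
      using lg k0 by (metis div_mult_self_is_m)
    then show ?thesis using fo unfolding factor_order_def FactGroup_def by simp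
  qed
  have "p > 0" using p prime_gt_0_nat by blast
  then have fq: "finite (carrier ((G\<lparr>carrier := H\<rparr>) Mod K))" using cq card_ge_0_finite by blast
  show ?thesis by (rule prime_order_cyclic[OF grp fq p cq])
qed

end



context group begin

lemma main_step:
  assumes fin: "finite (carrier G)" and p: "Factorial_Ring.prime p"
    and ps: "p_solvable p G" and syl: "sylow_subgroup p G P"
    and comm: "comm_group (G\<lparr>carrier := P\<rparr>)"
    and supN: "p_supersolvable p (G\<lparr>carrier := normalizer G P\<rparr>)"
    and ch: "chief_factor G H K" and dv: "p dvd factor_order H K"
  shows "factor_order H K = p"
proof -
  have sP: "subgroup P G" and cP: "card P = p ^ multiplicity p (order G)"
    using syl unfolding sylow_subgroup_def by auto
  have Pc: "P \<subseteq> carrier G" by (rule subgroup.subset[OF sP])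
  have K: "K \<lhd> G" and H: "H \<lhd> G" and KH: "K \<subset> H"
    and nomid: "\<And>N. N \<lhd> G \<Longrightarrow> K \<subset> N \<Longrightarrow> N \<subset> H \<Longrightarrow> False"
    using ch unfolding chief_factor_def by blast+
  have sK: "subgroup K G" and sH: "subgroup H G" using K H normal_imp_subgroup by auto
  obtain a where a: "factor_order H K = p ^ a" using chief_ppow[OF fin p ps ch dv] by blast
  have HPK: "(H \<inter> P) <#> K = H"
    using stepB[OF fin p sP cP K H _ ] KH a unfolding factor_order_def by blast
  define C where "C = cent H K"
  have nC: "C \<lhd> G" unfolding C_def by (rule cent_normal[OF K H])
  have PC: "P \<subseteq> C" unfolding C_def by (rule P_in_cent[OF K H sP comm HPK])
  define N where "N = normalizer G P"
  have sN: "subgroup N G" unfolding N_def by (rule normalizer_imp_subgroup[OF Pc])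
  have Nchar: "\<And>n. n \<in> N \<longleftrightarrow> n \<in> carrier G \<and> (\<forall>y\<in>P. n \<otimes> y \<otimes> inv n \<in> P)"
    unfolding N_def using normalizer_iff[OF fin Pc] by blast
  have fr: "\<And>g. g \<in> carrier G \<Longrightarrow> \<exists>c\<in>C. \<exists>n\<in>N. g = c \<otimes> n"
    unfolding N_def using frattini[OF fin p sP cP nC PC] by blast
  define H1 where "H1 = H \<inter> P"
  define K1 where "K1 = K \<inter> P"
  have sH1: "subgroup H1 G" unfolding H1_def by (rule subgroups_Inter_pair[OF sH sP])
  have sK1: "subgroup K1 G" unfolding K1_def by (rule subgroups_Inter_pair[OF sK sP])
  have PN: "P \<subseteq> N"
  proof
    fix y assume y: "y \<in> P"
    have "\<forall>z\<in>P. y \<otimes> z \<otimes> inv y \<in> P"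
      using y subgroup.m_closed[OF sP] subgroup.m_inv_closed[OF sP] by blast
    then show "y \<in> N" using Nchar scarr[OF sP y] by blast
  qed
  have nH1: "H1 \<lhd> G\<lparr>carrier := N\<rparr>"
  proof -
    have "\<forall>n\<in>N. \<forall>h\<in>H1. n \<otimes> h \<otimes> inv n \<in> H1"
      unfolding H1_def using Nchar nconj[OF H] by blast
    then show ?thesis using sub_normal_iff[OF sN] sH1 PN unfolding H1_def by blast
  qed
  have nK1: "K1 \<lhd> G\<lparr>carrier := N\<rparr>"
  proof -
    have "\<forall>n\<in>N. \<forall>h\<in>K1. n \<otimes> h \<otimes> inv n \<in> K1"
      unfolding K1_def using Nchar nconj[OF K] by blast
    then show ?thesis using sub_normal_iff[OF sN] sK1 PN unfolding K1_def by blast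
  qed
  have k0: "card K > 0" by (rule card_subgroup_pos[OF fin sK])
  have k10: "card K1 > 0" by (rule card_subgroup_pos[OF fin sK1])
  have cc: "card H * card K1 = card H1 * card K"
  proof -
    have "card (H1 <#> K) * card (H1 \<inter> K) = card H1 * card K" by (rule prod_card[OF fin sH1 sK])
    moreover have "H1 \<inter> K = K1" unfolding H1_def K1_def using KH by blast
    ultimately show ?thesis using HPK unfolding H1_def by simp
  qed
  obtain f where f: "card H = card K * f" using card_subgroup_dvd[OF fin sK sH] KH by (auto elim!: dvdE)
  have fo: "factor_order H K = f" unfolding factor_order_def using f k0 by simp
  have "card K * (f * card K1) = card K * card H1" using cc f by (simp add: ac_simps)
  then have h1: "card H1 = f * card K1" using k0 by simp
  have fo1: "factor_order H1 K1 = f" unfolding factor_order_def using h1 k10 by simp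
  have f1: "f \<noteq> 1"
  proof
    assume "f = 1"
    then have "p dvd 1" using dv fo by simp
    then show False using p by auto
  qed
  have chN: "chief_factor (G\<lparr>carrier := N\<rparr>) H1 K1"
    unfolding chief_factor_def
  proof (intro conjI)
    show "K1 \<lhd> G\<lparr>carrier := N\<rparr>" by (rule nK1)
    show "H1 \<lhd> G\<lparr>carrier := N\<rparr>" by (rule nH1)
    have "K1 \<subseteq> H1" unfolding K1_def H1_def using KH by blast
    moreover have "K1 \<noteq> H1" using h1 f1 k10 by auto
    ultimately show "K1 \<subset> H1" by blast
    show "\<not> (\<exists>M. M \<lhd> G\<lparr>carrier := N\<rparr> \<and> K1 \<subset> M \<and> M \<subset> H1)"
    proof
      assume "\<exists>M. M \<lhd> G\<lparr>carrier := N\<rparr> \<and> K1 \<subset> M \<and> M \<subset> H1"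
      then obtain M where nM: "M \<lhd> G\<lparr>carrier := N\<rparr>" and KM: "K1 \<subset> M" and MH: "M \<subset> H1" by blast
      have sM: "subgroup M G" and MN: "M \<subseteq> N" and Mc: "\<And>n m. n \<in> N \<Longrightarrow> m \<in> M \<Longrightarrow> n \<otimes> m \<otimes> inv n \<in> M"
        using nM sub_normal_iff[OF sN] by auto
      define M' where "M' = M <#> K"
      have sM': "subgroup M' G" unfolding M'_def by (rule normal_mult_subgroup[OF K sM])
      have MHs: "M \<subseteq> H" "M \<subseteq> P" using MH unfolding H1_def by auto
      have conj: "g \<otimes> x \<otimes> inv g \<in> M'" if g: "g \<in> carrier G" and x: "x \<in> M'" for g x
      proof -
        obtain m k where mk: "m \<in> M" "k \<in> K" "x = m \<otimes> k" using x unfolding M'_def mem_set_mult by blast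
        obtain c n where cn: "c \<in> C" "n \<in> N" "g = c \<otimes> n" using fr[OF g] by blast
        have cC: "c \<in> carrier G" using cn(1) unfolding C_def cent_def by auto
        have nc: "n \<in> carrier G" using cn(2) Nchar by blast
        have mc: "m \<in> carrier G" by (rule scarr[OF sM mk(1)])
        have kc: "k \<in> carrier G" by (rule ncarr[OF K mk(2)])
        define m' where "m' = n \<otimes> m \<otimes> inv n"
        have m'M: "m' \<in> M" unfolding m'_def by (rule Mc[OF cn(2) mk(1)])
        have m'c: "m' \<in> carrier G" by (rule scarr[OF sM m'M])
        have m'H: "m' \<in> H" using m'M MHs by auto
        have k1: "c \<otimes> m' \<otimes> inv c \<otimes> inv m' \<in> K" using cn(1) m'H unfolding C_def cent_def by auto
        have k2: "inv m' \<otimes> (c \<otimes> m' \<otimes> inv c \<otimes> inv m') \<otimes> m' \<in> K" by (rule nconj'[OF K m'c k1])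
        have k3: "g \<otimes> k \<otimes> inv g \<in> K" by (rule nconj[OF K g mk(2)])
        have kk: "(inv m' \<otimes> (c \<otimes> m' \<otimes> inv c \<otimes> inv m') \<otimes> m') \<otimes> (g \<otimes> k \<otimes> inv g) \<in> K"
          by (rule subgroup.m_closed[OF sK k2 k3])
        have "g \<otimes> x \<otimes> inv g = m' \<otimes> ((inv m' \<otimes> (c \<otimes> m' \<otimes> inv c \<otimes> inv m') \<otimes> m') \<otimes> (g \<otimes> k \<otimes> inv g))"
          unfolding m'_def using mk(3) cn(3) cC nc mc kc by (simp add: gs)
        then show ?thesis unfolding M'_def mem_set_mult using m'M kk by blast
      qed
      have nM': "M' \<lhd> G" using normal_inv_iff sM' conj by blast
      have KM': "K \<subseteq> M'"
      proof
        fix k assume "k \<in> K"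
        then have "k = \<one> \<otimes> k" "\<one> \<in> M" using ncarr[OF K] subgroup.one_closed[OF sM] by auto
        then show "k \<in> M'" unfolding M'_def mem_set_mult using \<open>k \<in> K\<close> by blast
      qed
      obtain m where m: "m \<in> M" "m \<notin> K1" using KM by blast
      have "m \<notin> K" using m MHs unfolding K1_def by auto
      moreover have "m \<in> M'"
      proof -
        have "m = m \<otimes> \<one>" "\<one> \<in> K" using scarr[OF sM m(1)] subgroup.one_closed[OF sK] by auto
        then show ?thesis unfolding M'_def mem_set_mult using m(1) by blast
      qed
      ultimately have KsM': "K \<subset> M'" using KM' by blast
      have M'H: "M' \<subseteq> H"
      proof
        fix x assume "x \<in> M'"
        then obtain m k where mk: "m \<in> M" "k \<in> K" "x = m \<otimes> k" unfolding M'_def mem_set_mult by blast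
        have "K \<subseteq> H" using KH by blast
        then have "m \<in> H" "k \<in> H" using mk MHs by auto
        then have "m \<otimes> k \<in> H" by (rule subgroup.m_closed[OF sH])
        then show "x \<in> H" using mk(3) by simp
      qed
      have "M' \<noteq> H"
      proof
        assume eq: "M' = H"
        have "H1 \<subseteq> M"
        proof
          fix s assume s: "s \<in> H1"
          then have "s \<in> M'" using eq unfolding H1_def by simp
          then obtain m k where mk: "m \<in> M" "k \<in> K" "s = m \<otimes> k" unfolding M'_def mem_set_mult by blast
          have mc: "m \<in> carrier G" by (rule scarr[OF sM mk(1)])
          have kc: "k \<in> carrier G" by (rule ncarr[OF K mk(2)])
          have "k = inv m \<otimes> s" using mk(3) mc kc by simp
          moreover have "inv m \<otimes> s \<in> P"
            using subgroup.m_closed[OF sP subgroup.m_inv_closed[OF sP]] MHs mk(1) s unfolding H1_def by blast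
          ultimately have "k \<in> K1" unfolding K1_def using mk(2) by simp
          then have "k \<in> M" using KM by blast
          then show "s \<in> M" using mk subgroup.m_closed[OF sM] by simp
        qed
        then show False using MH by blast
      qed
      then have "M' \<subset> H" using M'H by blast
      then show False using nomid[OF nM' KsM'] by blast
    qed
  qed
  have "p dvd factor_order H1 K1" using fo fo1 dv by simp
  then have "factor_order H1 K1 = p" using supN chN unfolding p_supersolvable_def N_def by blast
  then show ?thesis using fo fo1 by simp
qed

end

theorem mainTheorem2:
  fixes G :: "('a, 'b) monoid_scheme" and p :: nat and P :: "'a set"
  assumes "group G" and "finite (carrier G)" and "Factorial_Ring.prime p"
    and "p_solvable p G"
    and "sylow_subgroup p G P"
    and "comm_group (G\<lparr>carrier := P\<rparr>)"
    and "p_supersolvable p (G\<lparr>carrier := normalizer G P\<rparr>)"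
  shows "p_supersolvable p G"
proof -
  interpret group G by (rule assms(1))
  show ?thesis unfolding p_supersolvable_def
  proof (intro allI impI)
    fix H K assume hk: "chief_factor G H K \<and> p dvd factor_order H K"
    have fo: "factor_order H K = p" using main_step[OF assms(2,3,4,5,6,7)] hk by blast
    have K: "K \<lhd> G" and H: "H \<lhd> G" and KH: "K \<subset> H"
      using hk unfolding chief_factor_def by blast+
    have sH: "subgroup H G" using H normal_imp_subgroup by blast
    have "K \<lhd> G\<lparr>carrier := H\<rparr>"
      using sub_normal_iff[OF sH] normal_imp_subgroup[OF K] KH nconj[OF K] scarr[OF sH] by blast
    then have "cyclic_group ((G\<lparr>carrier := H\<rparr>) Mod K)"
      by (rule factor_cyclic[OF assms(2) sH _ assms(3) fo])
    then show "factor_order H K = p \<and> cyclic_group ((G\<lparr>carrier := H\<rparr>) Mod K)" using fo by simp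
  qed
qed


end
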